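(* There exists a topological dynamical system $(X,T)$ which is not thickly sensitive and satisfies $\mathrm{Eq}_{\mathrm{syn}}(X,T)=\varnothing$.
   Context: $(X,\varrho)$ compact metric, $T$ continuous surjection. $S_T(U,\delta)=\{n\in\mathbb{N}:\exists x_1,x_2\in U,\ \varrho(T^nx_1,T^nx_2)>\delta\}$, $J_T(U,\delta)=\mathbb N\setminus S_T(U,\delta)$. Thick: contains arbitrarily long blocks of consecutive integers; syndetic: bounded gaps. Thickly sensitive: there is $\delta>0$ with $S_T(U,\delta)$ thick for all opene $U$. $\mathrm{Eq}_{\mathrm{syn}}(X,T)$: points $x$ such that for every $\varepsilon>0$ some neighborhood $U$ of $x$ has $J_T(U,\varepsilon)$ syndetic. *)

theory Defs
  imports "HOL-Analysis.Analysis"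
begin

definition tds :: "'a set \<Rightarrow> ('a \<Rightarrow> 'a \<Rightarrow> real) \<Rightarrow> ('a \<Rightarrow> 'a) \<Rightarrow> bool" where
  "tds M d T \<longleftrightarrow> Metric_space M d \<and> M \<noteq> {} \<and>
     compact_space (Metric_space.mtopology M d) \<and>
     continuous_map (Metric_space.mtopology M d) (Metric_space.mtopology M d) T \<and>
     T ` M = M"

definition thick :: "nat set \<Rightarrow> bool" where
  "thick A \<longleftrightarrow> (\<forall>L. \<exists>n. {n..n+L} \<subseteq> A)"

definition syndetic :: "nat set \<Rightarrow> bool" where
  "syndetic A \<longleftrightarrow> (\<exists>L. \<forall>n. {n..n+L} \<inter> A \<noteq> {})"

definition S_T :: "('a \<Rightarrow> 'a \<Rightarrow> real) \<Rightarrow> ('a \<Rightarrow> 'a) \<Rightarrow> 'a set \<Rightarrow> real \<Rightarrow> nat set" where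
  "S_T d T U \<delta> = {n. \<exists>x1\<in>U. \<exists>x2\<in>U. d ((T ^^ n) x1) ((T ^^ n) x2) > \<delta>}"

definition J_T :: "('a \<Rightarrow> 'a \<Rightarrow> real) \<Rightarrow> ('a \<Rightarrow> 'a) \<Rightarrow> 'a set \<Rightarrow> real \<Rightarrow> nat set" where
  "J_T d T U \<delta> = UNIV - S_T d T U \<delta>"

definition thickly_sensitive :: "'a set \<Rightarrow> ('a \<Rightarrow> 'a \<Rightarrow> real) \<Rightarrow> ('a \<Rightarrow> 'a) \<Rightarrow> bool" where
  "thickly_sensitive M d T \<longleftrightarrow> (\<exists>\<delta>>0. \<forall>U. openin (Metric_space.mtopology M d) U \<and> U \<noteq> {}
      \<longrightarrow> thick (S_T d T U \<delta>))"

definition Eq_syn :: "'a set \<Rightarrow> ('a \<Rightarrow> 'a \<Rightarrow> real) \<Rightarrow> ('a \<Rightarrow> 'a) \<Rightarrow> 'a set" where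
  "Eq_syn M d T = {x\<in>M. \<forall>\<epsilon>>0. \<exists>U. openin (Metric_space.mtopology M d) U \<and> x \<in> U \<and>
      syndetic (J_T d T U \<epsilon>)}"

end

theory Submission
  imports Defs
begin

definition lam :: "nat \<Rightarrow> real" where "lam k = (1/4)^k"
definition tent :: "real \<Rightarrow> real" where "tent u = 1 - \<bar>2*u - 1\<bar>"
definition idx :: "real \<Rightarrow> nat" where "idx x = (LEAST k. lam k \<le> x)"
definition AA :: "nat \<Rightarrow> real set" where "AA k = {lam k..2*lam k}"
definition BB :: "nat \<Rightarrow> real set" where "BB k = {3*lam k..7/2*lam k}"
definition MM :: "real set" where "MM = {0} \<union> (\<Union>k\<in>{1..}. AA k \<union> BB k)"
definition TT :: "real \<Rightarrow> real" where
  "TT x = (if x \<le> 0 then 0 else if x \<le> 2 * lam (idx x) then lam (idx x) + lam (idx x) * tent (x / lam (idx x) - 1)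
      else if idx x = 1 then 2*x - 5/4 else 4*x)"

lemma lam_pos: "lam k > 0" by (simp add: lam_def)
lemma lam_Suc: "lam (Suc k) = lam k / 4" by (simp add: lam_def)
lemma lam_less: "j < k \<Longrightarrow> 4 * lam k \<le> lam j"
proof -
  assume "j < k"
  then have "lam k \<le> lam (Suc j)" unfolding lam_def by (intro power_decreasing) auto
  then show ?thesis by (simp add: lam_Suc)
qed
lemma lam_1: "lam 1 = 1/4" by (simp add: lam_def)

lemma idx_eq: assumes "lam k \<le> x" "x < 4 * lam k" shows "idx x = k"
  unfolding idx_def
proof (rule Least_equality)
  show "lam k \<le> x" by fact
  fix j assume "lam j \<le> x"
  show "k \<le> j"
  proof (rule ccontr)
    assume "\<not> k \<le> j" then have "4 * lam k \<le> lam j" by (intro lam_less) auto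
    with assms \<open>lam j \<le> x\<close> show False by linarith
  qed
qed

lemma TT_A: assumes "x \<in> AA k" shows "TT x = lam k + lam k * tent (x / lam k - 1)"
proof -
  have "idx x = k" using assms lam_pos[of k] by (intro idx_eq) (auto simp: AA_def)
  then show ?thesis using assms lam_pos[of k] by (auto simp: TT_def AA_def)
qed

lemma TT_B1: assumes "x \<in> BB 1" shows "TT x = 2*x - 5/4"
proof -
  have "idx x = 1" using assms lam_pos[of 1] by (intro idx_eq) (auto simp: BB_def)
  then show ?thesis using assms lam_pos[of 1] by (auto simp: TT_def BB_def)
qed

lemma TT_B: assumes "x \<in> BB k" "k \<ge> 2" shows "TT x = 4*x"
proof -
  have "idx x = k" using assms lam_pos[of k] by (intro idx_eq) (auto simp: BB_def)
  then show ?thesis using assms lam_pos[of k] by (auto simp: TT_def BB_def)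
qed

lemma TT_0: "TT 0 = 0" by (simp add: TT_def)

lemma tent_le: "u \<in> {0..1} \<Longrightarrow> tent u \<in> {0..1}" by (auto simp: tent_def)

lemma tent_img: "tent ` {0..1} = {0..1}"
proof
  show "tent ` {0..1} \<subseteq> {0..1}" using tent_le by auto
  show "{0..1} \<subseteq> tent ` {0..1}"
  proof
    fix v :: real assume v: "v \<in> {0..1}"
    have "tent (v/2) = v" using v by (auto simp: tent_def)
    moreover have "v/2 \<in> {0..1}" using v by auto
    ultimately show "v \<in> tent ` {0..1}" by (metis image_eqI)
  qed
qed

lemma tentn_img: "(tent^^n) ` {0..1} = {0..1}"
proof (induction n)
  case 0 then show ?case by simp
next
  case (Suc n)
  have "(tent^^Suc n) ` {0..1} = (tent^^n) ` (tent ` {0..1})"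
    by (simp only: funpow_Suc_right image_comp)
  then show ?case using Suc tent_img by simp
qed

lemma tent_aff_img:
  fixes a b :: real
  assumes "\<And>u. u \<in> {a..b} \<Longrightarrow> tent u = e*u + c" and "e > 0"
  shows "tent ` {a..b} = {e*a + c..e*b+c}"
proof -
  have "tent ` {a..b} = (\<lambda>u. e*u + c) ` {a..b}" using assms(1) by (auto intro!: image_cong)
  also have "\<dots> = {e*a + c..e*b+c}" using assms(2) image_affinity_atLeastAtMost[of e c a b]
    by (cases "a \<le> b") auto
  finally show ?thesis .
qed

lemma tent_aff_img2:
  fixes a b :: real
  assumes "\<And>u. u \<in> {a..b} \<Longrightarrow> tent u = (-e)*u + c" and "e > 0" "a \<le> b"
  shows "tent ` {a..b} = {(-e)*b + c..(-e)*a+c}"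
proof -
  have "tent ` {a..b} = (\<lambda>u. (-e)*u + c) ` {a..b}" using assms(1) by (auto intro!: image_cong)
  also have "\<dots> = {(-e)*b + c..(-e)*a+c}" using assms(2,3) image_affinity_atLeastAtMost[of "-e" c a b]
    by auto
  finally show ?thesis .
qed
lemma tent_dy_step:
  fixes j m :: nat
  assumes "j < 2^(Suc m)"
  shows "\<exists>j'. j' < 2^m \<and> tent ` {real j/2^(Suc m)..(real j+1)/2^(Suc m)} = {real j'/2^m..(real j'+1)/2^m}"
proof -
  define D :: real where "D = 2^m"
  have D: "D > 0" by (simp add: D_def)
  have e1: "(2::real)^(Suc m) = 2*D" by (simp add: D_def)
  show ?thesis
  proof (cases "j < 2^m")
    case True
    then have "j + 1 \<le> (2::nat)^m" by simp
    then have "real (j + 1) \<le> real ((2::nat)^m)" by (simp only: of_nat_le_iff)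
    then have jD': "real j + 1 \<le> D" unfolding D_def by simp
    have "tent ` {real j/(2*D)..(real j+1)/(2*D)} = {2*(real j/(2*D)) + 0..2*((real j+1)/(2*D)) + 0}"
    proof (rule tent_aff_img)
      fix u assume u: "u \<in> {real j/(2*D)..(real j+1)/(2*D)}"
      then have "u*(2*D) \<le> real j + 1" "real j \<le> u*(2*D)" using D by (simp_all add: pos_le_divide_eq pos_divide_le_eq)
      moreover have eq: "(2*u)*D = u*(2*D)" "u*D*2 = u*(2*D)" by (simp_all only: mult_ac)
      ultimately have a: "(2*u)*D \<le> 1*D" "0 * D \<le> u * D" using jD' by linarith+
      have "2*u \<le> 1" using mult_right_le_imp_le[OF a(1) D] .
      moreover have "0 \<le> u" using mult_right_le_imp_le[OF a(2) D] .
      ultimately have "u \<le> 1/2" "0 \<le> u" by auto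
      then show "tent u = 2*u + 0" by (auto simp: tent_def)
    qed simp
    also have "\<dots> = {real j/D..(real j+1)/D}"
    proof -
      have "2*(real j/(2*D)) + 0 = real j/D" "2*((real j+1)/(2*D)) + 0 = (real j+1)/D" using D by (simp_all add: field_simps)
      then show ?thesis by simp
    qed
    finally have "tent ` {real j/2^(Suc m)..(real j+1)/2^(Suc m)} = {real j/2^m..(real j+1)/2^m}"
      unfolding e1 D_def .
    then show ?thesis using True by blast
  next
    case False
    define j' where "j' = 2^(Suc m) - j - 1"
    have j'lt: "j' < 2^m" using False assms unfolding j'_def by auto
    have "real j' = real (2^(Suc m)) - real j - 1" using assms unfolding j'_def
      by (simp add: of_nat_diff)
    then have rj': "real j' = 2*D - real j - 1" unfolding D_def by simp
    have "(2::nat)^m \<le> j" using False by simp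
    then have "real ((2::nat)^m) \<le> real j" by (simp only: of_nat_le_iff)
    then have jge: "D \<le> real j" unfolding D_def by simp
    have "tent ` {real j/(2*D)..(real j+1)/(2*D)} = {(-2)*((real j+1)/(2*D)) + 2..(-2)*(real j/(2*D)) + 2}"
    proof (rule tent_aff_img2)
      fix u assume u: "u \<in> {real j/(2*D)..(real j+1)/(2*D)}"
      then have "real j \<le> u*(2*D)" using D by (simp_all add: pos_le_divide_eq pos_divide_le_eq)
      moreover have eq: "(2*u)*D = u*(2*D)" by (simp_all only: mult_ac)
      ultimately have a: "1*D \<le> (2*u)*D" using jge by linarith
      have "1 \<le> 2*u" using mult_right_le_imp_le[OF a D] .
      then have "1/2 \<le> u" by auto
      then show "tent u = (-2)*u + 2" by (auto simp: tent_def)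
    next
      show "real j/(2*D) \<le> (real j+1)/(2*D)" using D by (simp add: divide_right_mono)
    qed simp
    also have "\<dots> = {real j'/D..(real j'+1)/D}"
    proof -
      have "(-2)*((real j+1)/(2*D)) + 2 = (2*D - real j - 1)/D" using D by (simp add: field_simps)
      moreover have "(-2)*(real j/(2*D)) + 2 = (2*D - real j - 1 + 1)/D" using D by (simp add: field_simps)
      ultimately have "(-2)*((real j+1)/(2*D)) + 2 = real j'/D" "(-2)*(real j/(2*D)) + 2 = (real j'+1)/D"
        unfolding rj' by simp_all
      then show ?thesis by simp
    qed
    finally have "tent ` {real j/2^(Suc m)..(real j+1)/2^(Suc m)} = {real j'/2^m..(real j'+1)/2^m}"
      unfolding e1 D_def .
    then show ?thesis using j'lt by blast
  qed
qed
lemma tent_dy: "j < 2^m \<Longrightarrow> (tent^^m) ` {real j/2^m..(real j+1)/2^m} = {0..1}"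
proof (induction m arbitrary: j)
  case 0 then show ?case by simp
next
  case (Suc m)
  obtain j' where j': "j' < 2^m" "tent ` {real j/2^(Suc m)..(real j+1)/2^(Suc m)} = {real j'/2^m..(real j'+1)/2^m}"
    using tent_dy_step Suc.prems by blast
  have "(tent^^Suc m) ` {real j/2^(Suc m)..(real j+1)/2^(Suc m)} = (tent^^m) ` (tent ` {real j/2^(Suc m)..(real j+1)/2^(Suc m)})"
    by (simp only: funpow_Suc_right image_comp)
  then show ?case using j' Suc.IH by simp
qed


lemma tent_open:
  fixes a b :: real
  assumes "a < b" "0 \<le> a" "b \<le> 1"
  shows "\<exists>m. \<forall>n\<ge>m. (tent^^n) ` {a..b} = {0..1}"
proof -
  obtain m where m: "(1/2::real)^m < (b-a)/2" using real_arch_pow_inv[of "(b-a)/2" "1/2::real"] assms by auto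
  define D :: real where "D = 2^m"
  have D: "D > 0" by (simp add: D_def)
  have mD: "2/D < b - a" using m unfolding D_def by (simp add: power_divide field_simps)
  then have mD': "2 < (b - a)*D" using D by (simp add: field_simps)
  define j where "j = nat \<lceil>a*D\<rceil>"
  have rj: "real j = of_int \<lceil>a*D\<rceil>" unfolding j_def using assms D by (simp add: zero_le_mult_iff)
  have j1: "a*D \<le> real j" unfolding rj by linarith
  have j2: "real j < a*D + 1" unfolding rj by linarith
  have "real j + 1 < b*D" using j2 mD' by (simp add: algebra_simps)
  also have "\<dots> \<le> D" using assms D by simp
  finally have "real j + 1 < D" .
  then have "real j < real ((2::nat)^m)" unfolding D_def by (metis of_nat_numeral of_nat_power less_add_one order_less_trans)
  then have jlt: "j < 2^m" by (simp only: of_nat_less_iff)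
  have sub: "{real j/2^m..(real j+1)/2^m} \<subseteq> {a..b}"
  proof -
    have "a \<le> real j / D" using j1 D by (simp add: pos_le_divide_eq)
    moreover have "(real j + 1)/D \<le> b" using \<open>real j + 1 < b*D\<close> D by (simp add: pos_divide_le_eq)
    ultimately show ?thesis unfolding D_def by auto
  qed
  show ?thesis
  proof (intro exI allI impI)
    fix n assume "m \<le> n"
    then have nn: "n = (n - m) + m" by simp
    have "(tent^^n) ` {a..b} \<supseteq> (tent^^n) ` {real j/2^m..(real j+1)/2^m}" using sub by (rule image_mono)
    also have "(tent^^n) ` {real j/2^m..(real j+1)/2^m} = (tent^^(n-m)) ` ((tent^^m) ` {real j/2^m..(real j+1)/2^m})"
      by (subst nn) (simp only: funpow_add image_comp)
    also have "\<dots> = {0..1}" using tent_dy[OF jlt] tentn_img by simp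
    finally have "{0..1} \<subseteq> (tent^^n) ` {a..b}" .
    moreover have "(tent^^n) ` {a..b} \<subseteq> {0..1}"
      using image_mono[of "{a..b}" "{0..1}" "tent^^n"] assms tentn_img[of n] by auto
    ultimately show "(tent^^n) ` {a..b} = {0..1}" by auto
  qed
qed


lemma tentn_le: "u \<in> {0..1} \<Longrightarrow> (tent^^n) u \<in> {0..1}"
  using tentn_img[of n] by blast

lemma four_lam: "(4::real)^k * lam k = 1"
  by (simp add: lam_def power_mult_distrib[symmetric])

lemma TTn_A: assumes "x \<in> AA k" shows "(TT^^n) x = lam k + lam k * (tent^^n) (x / lam k - 1)"
proof (induction n)
  case 0 show ?case using lam_pos[of k] by (simp add: field_simps)
next
  case (Suc n)
  define v where "v = (tent^^n) (x / lam k - 1)"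
  have u01: "x / lam k - 1 \<in> {0..1}" using assms lam_pos[of k]
    by (auto simp: AA_def pos_le_divide_eq pos_divide_le_eq)
  have v01: "v \<in> {0..1}" unfolding v_def using tentn_le[OF u01] .
  have yA: "lam k + lam k * v \<in> AA k" using v01 lam_pos[of k] by (auto simp: AA_def)
  have "(TT^^Suc n) x = TT (lam k + lam k * v)" using Suc by (simp add: v_def)
  also have "\<dots> = lam k + lam k * tent ((lam k + lam k * v) / lam k - 1)" using TT_A[OF yA] .
  also have "(lam k + lam k * v) / lam k - 1 = v" using lam_pos[of k] by (simp add: field_simps)
  finally show ?case by (simp add: v_def)
qed

lemma TTn_A_mem: assumes "x \<in> AA k" shows "(TT^^n) x \<in> AA k"
proof -
  have u01: "x / lam k - 1 \<in> {0..1}" using assms lam_pos[of k]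
    by (auto simp: AA_def pos_le_divide_eq pos_divide_le_eq)
  show ?thesis using TTn_A[OF assms, of n] tentn_le[OF u01, of n] lam_pos[of k] by (auto simp: AA_def)
qed

lemma phiB: assumes "x \<in> BB k" shows "2*4^k*x - 6 \<in> {0..1}"
proof -
  have "3*lam k \<le> x" "x \<le> 7/2*lam k" using assms by (auto simp: BB_def)
  then have "3*(4^k*lam k) \<le> 4^k * x" "4^k*x \<le> 7/2*(4^k * lam k)" by (simp_all add: mult_left_mono)
  then show ?thesis unfolding four_lam by (auto simp: mult.commute)
qed

lemma TTk_B_aux: "\<forall>x. x \<in> BB (Suc j) \<longrightarrow> (TT^^(Suc j)) x = (2*4^(Suc j)*x - 6 + 1)/4"
proof (induction j)
  case 0
  show ?case using TT_B1 by simp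
next
  case (Suc k)
  show ?case
  proof (intro allI impI)
    fix x assume xB: "x \<in> BB (Suc (Suc k))"
    have "TT x = 4*x" using TT_B[OF xB] by simp
    moreover have "4*x \<in> BB (Suc k)" using xB by (auto simp: BB_def lam_Suc)
    ultimately have "(TT^^Suc (Suc k)) x = (2*4^(Suc k)*(4*x) - 6 + 1)/4"
      using Suc.IH by (simp only: funpow_Suc_right comp_apply)
    then show "(TT^^Suc (Suc k)) x = (2*4^(Suc (Suc k))*x - 6 + 1)/4" by simp
  qed
qed

lemma TTk_B: assumes "x \<in> BB k" "1 \<le> k" shows "(TT^^k) x = (2*4^k*x - 6 + 1)/4"
proof -
  obtain j where "k = Suc j" using assms(2) by (cases k) auto
  then show ?thesis using TTk_B_aux[of j] assms(1) by simp
qed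

lemma TTn_B: assumes "x \<in> BB k" "1 \<le> k"
  shows "(TT^^(k+n)) x = 1/4 + 1/4 * (tent^^n) (2*4^k*x - 6)"
proof -
  have yA: "(TT^^k) x \<in> AA 1" using TTk_B[OF assms] phiB[OF assms(1)] by (auto simp: AA_def lam_def)
  have "(TT^^(k+n)) x = (TT^^n) ((TT^^k) x)" by (subst add.commute) (simp only: funpow_add comp_apply)
  also have "\<dots> = 1/4 + 1/4 * (tent^^n) ((TT^^k) x / (1/4) - 1)" using TTn_A[OF yA] by (simp add: lam_def)
  also have "(TT^^k) x / (1/4) - 1 = 2*4^k*x - 6" using TTk_B[OF assms] by simp
  finally show ?thesis .
qed


lemma mem_MM: "y \<in> MM \<longleftrightarrow> y = 0 \<or> (\<exists>k\<ge>1. y \<in> AA k \<or> y \<in> BB k)"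
  unfolding MM_def by auto

lemma MM_nonneg: "y \<in> MM \<Longrightarrow> 0 \<le> y"
  using lam_pos unfolding mem_MM AA_def BB_def
  by (auto intro: order_trans[rotated] less_imp_le)

lemma AA_sub: "k \<ge> 1 \<Longrightarrow> AA k \<subseteq> MM" unfolding MM_def by auto
lemma BB_sub: "k \<ge> 1 \<Longrightarrow> BB k \<subseteq> MM" unfolding MM_def by auto

lemma sep_A:
  assumes x: "x \<in> AA k" and y: "y \<in> MM" and d: "\<bar>y - x\<bar> < lam k / 8"
  shows "y \<in> AA k"
proof -
  have xb: "lam k \<le> x" "x \<le> 2 * lam k" using x by (auto simp: AA_def)
  have lk: "lam k > 0" by (rule lam_pos)
  { assume "y = 0" then have False using xb d lk by auto }
  moreover
  { fix j assume j: "j \<ge> 1" "y \<in> AA j \<or> y \<in> BB j"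
    have yb: "lam j \<le> y" "y \<le> 7/2 * lam j" using j(2) lam_pos[of j] by (auto simp: AA_def BB_def)
    have "y \<in> AA k"
    proof (cases j k rule: linorder_cases)
      case less
      then have "4 * lam k \<le> lam j" by (rule lam_less)
      then show ?thesis using yb xb d by auto
    next
      case greater
      then have "4 * lam j \<le> lam k" by (rule lam_less)
      then show ?thesis using yb xb d by auto
    next
      case equal
      then show ?thesis using j(2) xb d lk by (auto simp: BB_def)
    qed }
  ultimately show ?thesis using y unfolding mem_MM by blast
qed

lemma sep_B:
  assumes x: "x \<in> BB k" and y: "y \<in> MM" and d: "\<bar>y - x\<bar> < lam k / 8"
  shows "y \<in> BB k"
proof -
  have xb: "3 * lam k \<le> x" "x \<le> 7/2 * lam k" using x by (auto simp: BB_def)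
  have lk: "lam k > 0" by (rule lam_pos)
  { assume "y = 0" then have False using xb d lk by auto }
  moreover
  { fix j assume j: "j \<ge> 1" "y \<in> AA j \<or> y \<in> BB j"
    have yb: "lam j \<le> y" "y \<le> 7/2 * lam j" using j(2) lam_pos[of j] by (auto simp: AA_def BB_def)
    have "y \<in> BB k"
    proof (cases j k rule: linorder_cases)
      case less
      then have "4 * lam k \<le> lam j" by (rule lam_less)
      then show ?thesis using yb xb d by auto
    next
      case greater
      then have "4 * lam j \<le> lam k" by (rule lam_less)
      then show ?thesis using yb xb d by auto
    next
      case equal
      then show ?thesis using j(2) xb d lk by (auto simp: AA_def)
    qed }
  ultimately show ?thesis using y unfolding mem_MM by blast
qed

lemma tent_lip: "\<bar>tent u - tent v\<bar> \<le> 2 * \<bar>u - v\<bar>"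
proof -
  have "\<bar>tent u - tent v\<bar> = \<bar>\<bar>2 * v - 1\<bar> - \<bar>2 * u - 1\<bar>\<bar>" by (simp add: tent_def)
  also have "\<dots> \<le> \<bar>(2 * v - 1) - (2 * u - 1)\<bar>" by (rule abs_triangle_ineq3)
  also have "(2 * v - 1) - (2 * u - 1) = 2 * (v - u)" by simp
  also have "\<bar>2 * (v - u)\<bar> = 2 * \<bar>u - v\<bar>" unfolding abs_mult by (simp add: abs_minus_commute)
  finally show ?thesis .
qed

lemma lip_A: assumes "x \<in> AA k" "y \<in> AA k" shows "\<bar>TT y - TT x\<bar> \<le> 4 * \<bar>y - x\<bar>"
proof -
  have lk: "lam k > 0" by (rule lam_pos)
  have "TT y - TT x = lam k * (tent (y / lam k - 1) - tent (x / lam k - 1))"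
    unfolding TT_A[OF assms(1)] TT_A[OF assms(2)] by (simp add: right_diff_distrib)
  then have "\<bar>TT y - TT x\<bar> = lam k * \<bar>tent (y / lam k - 1) - tent (x / lam k - 1)\<bar>"
    using lk by (simp add: abs_mult)
  also have "\<dots> \<le> lam k * (2 * \<bar>(y / lam k - 1) - (x / lam k - 1)\<bar>)"
    using tent_lip[of "y / lam k - 1" "x / lam k - 1"] lk by (intro mult_left_mono) auto
  also have "(y / lam k - 1) - (x / lam k - 1) = (y - x) / lam k" by (simp add: diff_divide_distrib)
  also have "lam k * (2 * \<bar>(y - x) / lam k\<bar>) = 2 * \<bar>y - x\<bar>" using lk by (simp add: abs_divide)
  finally show ?thesis by simp
qed

lemma lip_B: assumes "x \<in> BB k" "y \<in> BB k" "k \<ge> 1" shows "\<bar>TT y - TT x\<bar> \<le> 4 * \<bar>y - x\<bar>"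
proof (cases "k = 1")
  case True
  then have "TT y - TT x = 2 * (y - x)" using TT_B1 assms by simp
  then have "\<bar>TT y - TT x\<bar> = \<bar>2\<bar> * \<bar>y - x\<bar>" by (simp only: abs_mult)
  then show ?thesis by simp
next
  case False
  then have "k \<ge> 2" using assms(3) by simp
  then have "TT y - TT x = 4 * (y - x)" using TT_B assms by simp
  then have "\<bar>TT y - TT x\<bar> = \<bar>4\<bar> * \<bar>y - x\<bar>" by (simp only: abs_mult)
  then show ?thesis by simp
qed

lemma TT_0_bound: assumes "y \<in> MM" shows "\<bar>TT y\<bar> \<le> 4 * \<bar>y\<bar>"
proof -
  { assume "y = 0" then have ?thesis by (simp add: TT_0) }
  moreover
  { fix k assume k: "k \<ge> 1" "y \<in> AA k"
    have "TT y \<in> AA k" using TTn_A_mem[OF k(2), of 1] by simp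
    then have ?thesis using k(2) lam_pos[of k] by (auto simp: AA_def) }
  moreover
  { assume y: "y \<in> BB 1"
    have "TT y \<in> AA 1" using TTn_A_mem TTk_B[OF y] phiB[OF y] by (simp add: AA_def lam_def)
    then have ?thesis using y by (auto simp: AA_def BB_def lam_def) }
  moreover
  { fix k assume k: "k \<ge> 2" "y \<in> BB k"
    have ?thesis using TT_B[OF k(2,1)] k lam_pos[of k] by (auto simp: BB_def) }
  moreover
  { fix k assume k: "k \<ge> 1" "y \<in> BB k"
    have ?thesis
    proof (cases "k = 1")
      case True then show ?thesis using k \<open>y \<in> BB 1 \<Longrightarrow> ?thesis\<close> by simp
    next
      case False then have "k \<ge> 2" using k(1) by simp
      then show ?thesis using k \<open>\<And>k. k \<ge> 2 \<Longrightarrow> y \<in> BB k \<Longrightarrow> ?thesis\<close> by blast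
    qed }
  ultimately show ?thesis using assms unfolding mem_MM by blast
qed

lemma cont_TT: "continuous_on MM TT"
  unfolding continuous_on_iff
proof (intro ballI allI impI)
  fix x e :: real assume x: "x \<in> MM" and e: "e > 0"
  { assume "x = 0"
    then have "\<exists>d>0. \<forall>y\<in>MM. dist y x < d \<longrightarrow> dist (TT y) (TT x) < e"
    proof (intro exI[of _ "e/4"] conjI ballI impI)
      show "e/4 > 0" using e by simp
      fix y assume y: "y \<in> MM" "dist y x < e/4"
      have "\<bar>TT y\<bar> \<le> 4 * \<bar>y\<bar>" using TT_0_bound[OF y(1)] .
      then show "dist (TT y) (TT x) < e" using y(2) \<open>x = 0\<close> by (simp add: dist_real_def TT_0)
    qed }
  moreover
  { fix k assume k: "k \<ge> 1" "x \<in> AA k"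
    have "\<exists>d>0. \<forall>y\<in>MM. dist y x < d \<longrightarrow> dist (TT y) (TT x) < e"
    proof (intro exI[of _ "min (lam k / 8) (e/4)"] conjI ballI impI)
      show "min (lam k / 8) (e/4) > 0" using e lam_pos[of k] by simp
      fix y assume y: "y \<in> MM" "dist y x < min (lam k / 8) (e/4)"
      then have yA: "y \<in> AA k" using sep_A[OF k(2) y(1)] by (simp add: dist_real_def)
      show "dist (TT y) (TT x) < e" using lip_A[OF k(2) yA] y(2) by (simp add: dist_real_def)
    qed }
  moreover
  { fix k assume k: "k \<ge> 1" "x \<in> BB k"
    have "\<exists>d>0. \<forall>y\<in>MM. dist y x < d \<longrightarrow> dist (TT y) (TT x) < e"
    proof (intro exI[of _ "min (lam k / 8) (e/4)"] conjI ballI impI)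
      show "min (lam k / 8) (e/4) > 0" using e lam_pos[of k] by simp
      fix y assume y: "y \<in> MM" "dist y x < min (lam k / 8) (e/4)"
      then have yB: "y \<in> BB k" using sep_B[OF k(2) y(1)] by (simp add: dist_real_def)
      show "dist (TT y) (TT x) < e" using lip_B[OF k(2) yB k(1)] y(2) by (simp add: dist_real_def)
    qed }
  ultimately show "\<exists>d>0. \<forall>y\<in>MM. dist y x < d \<longrightarrow> dist (TT y) (TT x) < e"
    using x unfolding mem_MM by blast
qed



lemma MM_le1: "y \<in> MM \<Longrightarrow> y \<le> 1"
proof -
  assume "y \<in> MM"
  moreover { fix k :: nat assume "k \<ge> 1" "y \<in> AA k \<or> y \<in> BB k"
    moreover have "lam k \<le> lam 1" unfolding lam_def using \<open>k \<ge> 1\<close> by (intro power_decreasing) auto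
    ultimately have "y \<le> 1" by (auto simp: AA_def BB_def lam_def) }
  ultimately show ?thesis unfolding mem_MM by auto
qed

lemma MM_Inter: "MM = (\<Inter>N. {0..lam N} \<union> (\<Union>k\<in>{1..N}. AA k \<union> BB k))"
proof
  show "MM \<subseteq> (\<Inter>N. {0..lam N} \<union> (\<Union>k\<in>{1..N}. AA k \<union> BB k))"
  proof
    fix y assume y: "y \<in> MM"
    show "y \<in> (\<Inter>N. {0..lam N} \<union> (\<Union>k\<in>{1..N}. AA k \<union> BB k))"
    proof
      fix N
      { assume "y = 0" then have "y \<in> {0..lam N}" using lam_pos[of N] by simp }
      moreover
      { fix k assume k: "k \<ge> 1" "y \<in> AA k \<or> y \<in> BB k"
        have "y \<in> {0..lam N} \<union> (\<Union>k\<in>{1..N}. AA k \<union> BB k)"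
        proof (cases "k \<le> N")
          case True then show ?thesis using k by auto
        next
          case False
          then have "4 * lam k \<le> lam N" by (intro lam_less) simp
          then have "y \<in> {0..lam N}" using k lam_pos[of k] by (auto simp: AA_def BB_def)
          then show ?thesis by simp
        qed }
      ultimately show "y \<in> {0..lam N} \<union> (\<Union>k\<in>{1..N}. AA k \<union> BB k)"
        using y unfolding mem_MM by blast
    qed
  qed
  show "(\<Inter>N. {0..lam N} \<union> (\<Union>k\<in>{1..N}. AA k \<union> BB k)) \<subseteq> MM"
  proof
    fix y assume y: "y \<in> (\<Inter>N. {0..lam N} \<union> (\<Union>k\<in>{1..N}. AA k \<union> BB k))"
    show "y \<in> MM"
    proof (cases "y > 0")
      case True
      obtain N where N: "(1/4::real)^N < y" using real_arch_pow_inv[of y "1/4"] True by auto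
      have "y \<in> {0..lam N} \<union> (\<Union>k\<in>{1..N}. AA k \<union> BB k)" using y by blast
      moreover have "y \<notin> {0..lam N}" using N by (simp add: lam_def)
      ultimately show ?thesis unfolding MM_def by auto
    next
      case False
      have "y \<in> {0..lam 0} \<union> (\<Union>k\<in>{1..0}. AA k \<union> BB k)" using y by blast
      then have "y = 0" using False by auto
      then show ?thesis by (simp add: MM_def)
    qed
  qed
qed

lemma compact_MM: "compact MM"
proof (rule compact_eq_bounded_closed[THEN iffD2], rule conjI)
  show "bounded MM"
    using MM_le1 MM_nonneg by (intro bounded_subset[OF compact_imp_bounded[OF compact_Icc[of "0::real" 1]]]) auto
  show "closed MM"
    unfolding MM_Inter by (intro closed_INT ballI closed_Un closed_UN finite_atLeastAtMost)
      (auto simp: AA_def BB_def)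
qed

lemma TT_img: "TT ` MM = MM"
proof
  show "TT ` MM \<subseteq> MM"
  proof
    fix z assume "z \<in> TT ` MM"
    then obtain y where y: "y \<in> MM" "z = TT y" by auto
    { assume "y = 0" then have "z \<in> MM" using y by (simp add: TT_0 MM_def) }
    moreover
    { fix k assume k: "k \<ge> 1" "y \<in> AA k"
      have "z \<in> MM" using TTn_A_mem[OF k(2), of 1] AA_sub[OF k(1)] y by auto }
    moreover
    { assume yb: "y \<in> BB 1"
      have "TT y \<in> AA 1" using TTk_B[OF yb] phiB[OF yb] by (simp add: AA_def lam_def)
      then have "z \<in> MM" using AA_sub[of 1] y by auto }
    moreover
    { fix k assume k: "k \<ge> 2" "y \<in> BB k"
      obtain j where j: "k = Suc j" "j \<ge> 1" using k(1) by (cases k) auto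
      have "TT y \<in> BB j" using TT_B[OF k(2,1)] k(2) j by (auto simp: BB_def lam_Suc)
      then have "z \<in> MM" using BB_sub[OF j(2)] y by auto }
    moreover
    { fix k assume k: "k \<ge> 1" "y \<in> BB k"
      have "z \<in> MM"
      proof (cases "k = 1")
        case True then show ?thesis using k \<open>y \<in> BB 1 \<Longrightarrow> z \<in> MM\<close> by simp
      next
        case False then have "k \<ge> 2" using k(1) by simp
        then show ?thesis using k \<open>\<And>k. k \<ge> 2 \<Longrightarrow> y \<in> BB k \<Longrightarrow> z \<in> MM\<close> by blast
      qed }
    ultimately show "z \<in> MM" using y(1) unfolding mem_MM by blast
  qed
  show "MM \<subseteq> TT ` MM"
  proof
    fix z assume z: "z \<in> MM"
    { assume "z = 0"
      moreover have "(0::real) \<in> MM" by (simp add: MM_def)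
      ultimately have "z \<in> TT ` MM" using TT_0 by (intro image_eqI[of _ _ 0]) auto }
    moreover
    { fix k assume k: "k \<ge> 1" "z \<in> AA k"
      define v where "v = z / lam k - 1"
      have v: "v \<in> {0..1}" using k(2) lam_pos[of k] unfolding v_def
        by (auto simp: AA_def pos_le_divide_eq pos_divide_le_eq)
      define y where "y = lam k + lam k * (v/2)"
      have yA: "y \<in> AA k" using v lam_pos[of k] by (auto simp: AA_def y_def)
      have "TT y = lam k + lam k * tent (v/2)" using TT_A[OF yA] lam_pos[of k] by (simp add: y_def field_simps)
      also have "tent (v/2) = v" using v by (auto simp: tent_def)
      also have "lam k + lam k * v = z" using lam_pos[of k] by (simp add: v_def field_simps)
      finally have "z \<in> TT ` MM" using AA_sub[OF k(1)] yA by (intro image_eqI[of _ _ y]) auto }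
    moreover
    { fix k assume k: "k \<ge> 1" "z \<in> BB k"
      have yB: "z/4 \<in> BB (Suc k)" using k(2) by (auto simp: BB_def lam_Suc)
      have "TT (z/4) = z" using TT_B[OF yB] k(1) by simp
      moreover have "z/4 \<in> MM" using BB_sub[of "Suc k"] yB by auto
      ultimately have "z \<in> TT ` MM" by (intro image_eqI[of _ _ "z/4"]) auto }
    ultimately show "z \<in> TT ` MM" using z unfolding mem_MM by blast
  qed
qed



lemma mtop_eq: "Metric_space.mtopology M (dist::real\<Rightarrow>real\<Rightarrow>real) = top_of_set M"
proof -
  interpret Submetric UNIV dist M by unfold_locales auto
  show ?thesis using mtopology_submetric by simp
qed

lemma sens_gen:
  assumes sub: "{a..b} \<subseteq> U" and al: "\<alpha> > 0" and pq: "0 \<le> p" "p < q" "q \<le> 1"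
    and pre: "\<forall>v\<in>{p..q}. \<exists>y\<in>{a..b}. \<phi> y = v"
    and it: "\<forall>y\<in>{a..b}. \<forall>n. (TT^^(c+n)) y = \<alpha> + \<alpha> * (tent^^n) (\<phi> y)"
  shows "\<exists>N. \<forall>n\<ge>N. n \<in> S_T dist TT U (\<alpha>/2)"
proof -
  obtain m where m: "\<forall>n\<ge>m. (tent^^n) ` {p..q} = {0..1}" using tent_open[OF pq(2,1,3)] by blast
  show ?thesis
  proof (intro exI[of _ "c+m"] allI impI)
    fix n assume n: "c + m \<le> n"
    define n' where "n' = n - c"
    have nn: "n = c + n'" and n': "n' \<ge> m" using n unfolding n'_def by auto
    have img: "(tent^^n') ` {p..q} = {0..1}" using m n' by blast
    have "(0::real) \<in> (tent^^n') ` {p..q}" using img by simp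
    then obtain v1 where v1: "v1 \<in> {p..q}" "(tent^^n') v1 = 0" by auto
    have "(1::real) \<in> (tent^^n') ` {p..q}" using img by simp
    then obtain v2 where v2: "v2 \<in> {p..q}" "(tent^^n') v2 = 1" by auto
    obtain y1 where y1: "y1 \<in> {a..b}" "\<phi> y1 = v1" using pre v1(1) by blast
    obtain y2 where y2: "y2 \<in> {a..b}" "\<phi> y2 = v2" using pre v2(1) by blast
    have "(TT^^n) y1 = \<alpha>" using it y1 v1 nn by simp
    moreover have "(TT^^n) y2 = 2*\<alpha>" using it y2 v2 nn by simp
    ultimately have "dist ((TT^^n) y1) ((TT^^n) y2) > \<alpha>/2" using al by (simp add: dist_real_def)
    then show "n \<in> S_T dist TT U (\<alpha>/2)" unfolding S_T_def using y1(1) y2(1) sub by blast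
  qed
qed

lemma sens_A:
  assumes "a < b" "{a..b} \<subseteq> AA k" "{a..b} \<subseteq> U"
  shows "\<exists>N. \<forall>n\<ge>N. n \<in> S_T dist TT U (lam k/2)"
proof (rule sens_gen[where \<phi> = "\<lambda>y. y / lam k - 1" and c = 0 and p = "a / lam k - 1" and q = "b / lam k - 1"])
  have lk: "lam k > 0" by (rule lam_pos)
  have ab: "a \<in> AA k" "b \<in> AA k" using assms by auto
  show "{a..b} \<subseteq> U" "lam k > 0" by fact+
  show "0 \<le> a / lam k - 1" using ab lk by (auto simp: AA_def pos_le_divide_eq)
  show "a / lam k - 1 < b / lam k - 1" using assms(1) lk by (simp add: divide_strict_right_mono)
  show "b / lam k - 1 \<le> 1" using ab lk by (auto simp: AA_def pos_divide_le_eq)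
  show "\<forall>v\<in>{a / lam k - 1..b / lam k - 1}. \<exists>y\<in>{a..b}. y / lam k - 1 = v"
  proof
    fix v assume v: "v \<in> {a / lam k - 1..b / lam k - 1}"
    have "a / lam k \<le> v + 1" "v + 1 \<le> b / lam k" using v by auto
    then have "a \<le> (v+1) * lam k" "(v+1) * lam k \<le> b" using lk by (simp_all add: pos_le_divide_eq pos_divide_le_eq)
    then have "lam k * (v+1) \<in> {a..b}" by (simp add: mult.commute)
    moreover have "lam k * (v+1) / lam k - 1 = v" using lk by simp
    ultimately show "\<exists>y\<in>{a..b}. y / lam k - 1 = v" by blast
  qed
  show "\<forall>y\<in>{a..b}. \<forall>n. (TT ^^ (0 + n)) y = lam k + lam k * (tent ^^ n) (y / lam k - 1)"
    using TTn_A assms(2) by auto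
qed

lemma sens_B:
  assumes "a < b" "{a..b} \<subseteq> BB k" "{a..b} \<subseteq> U" "k \<ge> 1"
  shows "\<exists>N. \<forall>n\<ge>N. n \<in> S_T dist TT U (1/8)"
proof -
  have "\<exists>N. \<forall>n\<ge>N. n \<in> S_T dist TT U ((1/4)/2)"
  proof (rule sens_gen[where \<phi> = "\<lambda>y. 2*4^k*y - 6" and c = k and p = "2*4^k*a - 6" and q = "2*4^k*b - 6"])
    have ab: "a \<in> BB k" "b \<in> BB k" using assms by auto
    have pk: "(4::real)^k > 0" by simp
    show "{a..b} \<subseteq> U" "(1/4::real) > 0" using assms by auto
    show "0 \<le> 2*4^k*a - 6" "2*4^k*b - 6 \<le> 1" using phiB[OF ab(1)] phiB[OF ab(2)] by auto
    show "2*4^k*a - 6 < 2*4^k*b - 6" using assms(1) pk by simp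
    show "\<forall>v\<in>{2*4^k*a - 6..2*4^k*b - 6}. \<exists>y\<in>{a..b}. 2*4^k*y - 6 = v"
    proof
      fix v assume v: "v \<in> {2*4^k*a - 6..2*4^k*b - 6}"
      define y where "y = (v+6)/(2*4^k)"
      have e: "2*4^k*y - 6 = v" using pk by (simp add: y_def)
      have "2*4^k*a \<le> 2*4^k*y" "2*4^k*y \<le> 2*4^k*b" using v e by auto
      then have "y \<in> {a..b}" using pk by simp
      then show "\<exists>y\<in>{a..b}. 2*4^k*y - 6 = v" using e by blast
    qed
    show "\<forall>y\<in>{a..b}. \<forall>n. (TT ^^ (k + n)) y = 1/4 + 1/4 * (tent ^^ n) (2*4^k*y - 6)"
      using TTn_B assms(2,4) by auto
  qed
  then show ?thesis by simp
qed



lemma not_syn: assumes "\<forall>n\<ge>N. n \<in> S_T d T U e" shows "\<not> syndetic (J_T d T U e)"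
proof
  assume "syndetic (J_T d T U e)"
  then obtain L where "\<forall>n. {n..n+L} \<inter> J_T d T U e \<noteq> {}" unfolding syndetic_def by blast
  then obtain i where "i \<in> {N..N+L}" "i \<in> J_T d T U e" by blast
  then show False using assms unfolding J_T_def by auto
qed

lemma point_sens:
  assumes x: "x \<in> MM"
  shows "\<exists>e>0. \<forall>U. openin (top_of_set MM) U \<and> x \<in> U \<longrightarrow> (\<exists>N. \<forall>n\<ge>N. n \<in> S_T dist TT U e)"
proof -
  { assume "x = 0"
    have "\<forall>U. openin (top_of_set MM) U \<and> x \<in> U \<longrightarrow> (\<exists>N. \<forall>n\<ge>N. n \<in> S_T dist TT U (1/8))"
    proof (intro allI impI)
      fix U assume U: "openin (top_of_set MM) U \<and> x \<in> U"
      then obtain r where r: "r > 0" "\<forall>y\<in>MM. dist y x < r \<longrightarrow> y \<in> U"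
        unfolding openin_euclidean_subtopology_iff by blast
      obtain j where j: "(1/4::real)^j < r" using real_arch_pow_inv[of r "1/4"] r(1) by auto
      have "lam (Suc j) * 4 < r" using j by (simp add: lam_Suc lam_def)
      have sub: "{3*lam (Suc j)..7/2*lam (Suc j)} \<subseteq> U"
      proof
        fix y assume y: "y \<in> {3*lam (Suc j)..7/2*lam (Suc j)}"
        have "y \<in> MM" using BB_sub[of "Suc j"] y by (auto simp: BB_def)
        moreover have "dist y x < r" using y \<open>x = 0\<close> \<open>lam (Suc j) * 4 < r\<close> lam_pos[of "Suc j"] by (auto simp: dist_real_def)
        ultimately show "y \<in> U" using r(2) by blast
      qed
      show "\<exists>N. \<forall>n\<ge>N. n \<in> S_T dist TT U (1/8)"
        using sens_B[OF _ _ sub, of "Suc j"] lam_pos[of "Suc j"] by (simp add: BB_def)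
    qed
    then have ?thesis by (intro exI[of _ "1/8"]) auto }
  moreover
  { fix k assume k: "k \<ge> 1" "x \<in> AA k"
    have "\<forall>U. openin (top_of_set MM) U \<and> x \<in> U \<longrightarrow> (\<exists>N. \<forall>n\<ge>N. n \<in> S_T dist TT U (lam k/2))"
    proof (intro allI impI)
      fix U assume U: "openin (top_of_set MM) U \<and> x \<in> U"
      then obtain r where r: "r > 0" "\<forall>y\<in>MM. dist y x < r \<longrightarrow> y \<in> U"
        unfolding openin_euclidean_subtopology_iff by blast
      define a where "a = max (lam k) (x - r/2)"
      define b where "b = min (2*lam k) (x + r/2)"
      have xk: "lam k \<le> x" "x \<le> 2*lam k" using k(2) by (auto simp: AA_def)
      have ab: "a < b" using xk r(1) lam_pos[of k] unfolding a_def b_def by auto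
      have subA: "{a..b} \<subseteq> AA k" unfolding a_def b_def AA_def by auto
      have sub: "{a..b} \<subseteq> U"
      proof
        fix y assume y: "y \<in> {a..b}"
        have "y \<in> MM" using AA_sub[OF k(1)] subA y by auto
        moreover have "dist y x < r" using y r(1) unfolding a_def b_def by (auto simp: dist_real_def)
        ultimately show "y \<in> U" using r(2) by blast
      qed
      show "\<exists>N. \<forall>n\<ge>N. n \<in> S_T dist TT U (lam k/2)" using sens_A[OF ab subA sub] .
    qed
    then have ?thesis using lam_pos[of k] by (intro exI[of _ "lam k/2"]) auto }
  moreover
  { fix k assume k: "k \<ge> 1" "x \<in> BB k"
    have "\<forall>U. openin (top_of_set MM) U \<and> x \<in> U \<longrightarrow> (\<exists>N. \<forall>n\<ge>N. n \<in> S_T dist TT U (1/8))"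
    proof (intro allI impI)
      fix U assume U: "openin (top_of_set MM) U \<and> x \<in> U"
      then obtain r where r: "r > 0" "\<forall>y\<in>MM. dist y x < r \<longrightarrow> y \<in> U"
        unfolding openin_euclidean_subtopology_iff by blast
      define a where "a = max (3*lam k) (x - r/2)"
      define b where "b = min (7/2*lam k) (x + r/2)"
      have xk: "3*lam k \<le> x" "x \<le> 7/2*lam k" using k(2) by (auto simp: BB_def)
      have ab: "a < b" using xk r(1) lam_pos[of k] unfolding a_def b_def by (auto simp: max_def min_def)
      have subB: "{a..b} \<subseteq> BB k" unfolding a_def b_def BB_def by (auto simp: max_def min_def)
      have sub: "{a..b} \<subseteq> U"
      proof
        fix y assume y: "y \<in> {a..b}"
        have "y \<in> MM" using BB_sub[OF k(1)] subB y by auto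
        moreover have "dist y x < r" using y r(1) unfolding a_def b_def by (auto simp: dist_real_def)
        ultimately show "y \<in> U" using r(2) by blast
      qed
      show "\<exists>N. \<forall>n\<ge>N. n \<in> S_T dist TT U (1/8)" using sens_B[OF ab subB sub k(1)] .
    qed
    then have ?thesis by (intro exI[of _ "1/8"]) auto }
  ultimately show ?thesis using x unfolding mem_MM by blast
qed

lemma Eq_syn_empty: "Eq_syn MM dist TT = {}"
proof -
  { fix x assume x: "x \<in> Eq_syn MM dist TT"
    then have xM: "x \<in> MM" unfolding Eq_syn_def by auto
    obtain e where e: "e > 0" "\<forall>U. openin (top_of_set MM) U \<and> x \<in> U \<longrightarrow> (\<exists>N. \<forall>n\<ge>N. n \<in> S_T dist TT U e)"
      using point_sens[OF xM] by blast
    from x e(1) obtain U where U: "openin (top_of_set MM) U" "x \<in> U" "syndetic (J_T dist TT U e)"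
      unfolding Eq_syn_def mtop_eq by blast
    then obtain N where "\<forall>n\<ge>N. n \<in> S_T dist TT U e" using e(2) by blast
    then have False using not_syn U(3) by blast }
  then show ?thesis by blast
qed

lemma not_ts: "\<not> thickly_sensitive MM dist TT"
proof
  assume "thickly_sensitive MM dist TT"
  then obtain \<delta> where d: "\<delta> > 0" "\<forall>U. openin (top_of_set MM) U \<and> U \<noteq> {} \<longrightarrow> thick (S_T dist TT U \<delta>)"
    unfolding thickly_sensitive_def mtop_eq by blast
  obtain j where j: "(1/4::real)^j < \<delta>" using real_arch_pow_inv[of \<delta> "1/4"] d(1) by auto
  define k where "k = Suc j"
  have lk: "lam k \<le> \<delta>" using j d(1) by (simp add: k_def lam_def)
  have k1: "k \<ge> 1" by (simp add: k_def)
  have op: "openin (top_of_set MM) (AA k)"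
    unfolding openin_euclidean_subtopology_iff
  proof (intro conjI ballI)
    show "AA k \<subseteq> MM" using AA_sub[OF k1] .
    fix x assume x: "x \<in> AA k"
    show "\<exists>e>0. \<forall>x'\<in>MM. dist x' x < e \<longrightarrow> x' \<in> AA k"
      using sep_A[OF x] lam_pos[of k] by (intro exI[of _ "lam k/8"]) (auto simp: dist_real_def)
  qed
  have ne: "AA k \<noteq> {}" using lam_pos[of k] by (auto simp: AA_def)
  have "S_T dist TT (AA k) \<delta> = {}"
  proof -
    { fix n x1 x2 assume x: "x1 \<in> AA k" "x2 \<in> AA k"
      have "(TT^^n) x1 \<in> AA k" "(TT^^n) x2 \<in> AA k" using TTn_A_mem x by auto
      then have "dist ((TT^^n) x1) ((TT^^n) x2) \<le> \<delta>" using lk by (auto simp: AA_def dist_real_def)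
    } note H = this
    { fix n assume "n \<in> S_T dist TT (AA k) \<delta>"
      then obtain x1 x2 where "x1 \<in> AA k" "x2 \<in> AA k" "\<delta> < dist ((TT^^n) x1) ((TT^^n) x2)"
        unfolding S_T_def by blast
      with H have False by (meson not_le) }
    then show ?thesis by blast
  qed
  moreover have "thick (S_T dist TT (AA k) \<delta>)" using d(2) op ne by blast
  ultimately show False unfolding thick_def by auto
qed

theorem mainTheorem5:
  shows "\<exists>(M :: real set) (d :: real \<Rightarrow> real \<Rightarrow> real) (T :: real \<Rightarrow> real).
           tds M d T \<and> \<not> thickly_sensitive M d T \<and> Eq_syn M d T = {}"
proof (intro exI conjI)
  show "tds MM dist TT"
    unfolding tds_def mtop_eq
  proof (intro conjI)
    show "Metric_space MM dist" by (simp add: Met_TC.subspace)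
    show "MM \<noteq> {}" by (simp add: MM_def)
    show "compact_space (top_of_set MM)" using compact_MM by (simp add: compact_space_subtopology)
    show "continuous_map (top_of_set MM) (top_of_set MM) TT" using cont_TT TT_img by auto
    show "TT ` MM = MM" by (rule TT_img)
  qed
  show "\<not> thickly_sensitive MM dist TT" by (rule not_ts)
  show "Eq_syn MM dist TT = {}" by (rule Eq_syn_empty)
qed

end
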